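(* For all $n\ge1$, $\mathbf{cf}_{n,1}(p,q)|_{p^0}=q^{\binom{n}{2}}$. Moreover, $$\mathbf{cf}_{n,1}(p,q)|_{p^1}=\begin{cases}0 & n=1,2,3,\\ \binom{n-2}{2}q^{\binom{n}{2}-2} & n\ge4,\end{cases}$$ $$\mathbf{cf}_{n,1}(p,q)|_{p^2}=\begin{cases}0 & n=1,2,3,4,\\ \left(3\binom{n-1}{4}-\binom{n-3}{2}\right)q^{\binom{n}{2}-4} & n\ge5,\end{cases}$$ $$\mathbf{cf}_{n,1}(p,q)|_{p^3}=\begin{cases}0 & n=1,2,3,4,5,\\ \left(15\binom{n}{6}-6\binom{n-2}{4}+\binom{n-4}{4}\right)q^{\binom{n}{2}-6} & n\ge5.\end{cases}$$
   Context: $F_1(p,q)=q$, $F_2(p,q)=q^2$ and $F_m(p,q)=qF_{m-1}(p,q)+pF_{m-2}(p,q)$ for $m\ge3$. Let $(x)_{\uparrow_{F,p,q,0}}=1$ and $(x)_{\uparrow_{F,p,q,k}}=x(x+F_1(p,q))\cdots(x+F_{k-1}(p,q))$ for $k\ge1$. Define the polynomials $\mathbf{cf}_{n,k}(p,q)$ for $0\le k\le n$ by $(x)_{\uparrow_{F,p,q,n}}=\sum_{k=0}^n\mathbf{cf}_{n,k}(p,q)x^k$. For a polynomial $f$ in $p$ with coefficients in $\mathbb{Q}[q]$, $f|_{p^s}$ denotes the coefficient of $p^s$. *)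

theory Defs
  imports "HOL-Computational_Algebra.Polynomial"
begin

text \<open>Bivariate polynomials in p, q with rational coefficients are represented as
  polynomials in p whose coefficients are polynomials in q: type rat poly poly.\<close>

definition qv :: "rat poly poly" where "qv = [:[:0, 1:]:]"
definition pv :: "rat poly poly" where "pv = [:0, 1:]"

fun Fpq :: "nat \<Rightarrow> rat poly poly" where
  "Fpq 0 = 0"
| "Fpq (Suc 0) = qv"
| "Fpq (Suc (Suc 0)) = qv ^ 2"
| "Fpq (Suc (Suc (Suc m))) = qv * Fpq (Suc (Suc m)) + pv * Fpq (Suc m)"

definition rising_F :: "nat \<Rightarrow> rat poly poly poly" where
  "rising_F n = (if n = 0 then 1 else [:0, 1:] * (\<Prod>i\<in>{1..<n}. [:Fpq i, 1:]))"

definition cf :: "nat \<Rightarrow> nat \<Rightarrow> rat poly poly" where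
  "cf n k = coeff (rising_F n) k"

end

theory Submission
  imports Defs
begin
lemma ch: "(of_nat (x choose k)::rat) = (\<Prod>i = 0..<k. (of_nat x - of_nat i) / of_nat (k - i))"
  by (simp add: binomial_gbinomial gbinomial_altdef_of_nat)
lemma ch1: "(of_nat (x choose 1)::rat) = of_nat x" by simp
lemma ch2: "(of_nat (x choose 2)::rat) = of_nat x * (of_nat x - 1) / 2"
  by (simp add: ch numeral_eq_Suc)
lemma ch3: "(of_nat (x choose 3)::rat) = of_nat x * (of_nat x - 1) * (of_nat x - 2) / 6"
  by (simp add: ch numeral_eq_Suc)
lemma ch4: "(of_nat (x choose 4)::rat) = of_nat x * (of_nat x - 1) * (of_nat x - 2) * (of_nat x - 3) / 24"
  by (simp add: ch numeral_eq_Suc)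
lemma ch6: "(of_nat (x choose 6)::rat) = of_nat x * (of_nat x - 1) * (of_nat x - 2) * (of_nat x - 3) * (of_nat x - 4) * (of_nat x - 5) / 720"
  by (simp add: ch numeral_eq_Suc)

lemma coeff_qv: "coeff (qv * X) j = [:0,1:] * coeff X j" unfolding qv_def by simp
lemma coeff_pv: "coeff (pv * X) j = (if j = 0 then 0 else coeff X (j-1))"
  unfolding pv_def by (simp add: coeff_pCons split: nat.split)

definition cc :: "nat \<Rightarrow> nat \<Rightarrow> nat" where "cc m j = (m - 1 - j) choose j"

lemma pascal': "(Suc m - i) choose (Suc i) = ((m - i) choose (Suc i)) + ((m - i) choose i)"
proof (cases "i \<le> m")
  case True then have "Suc m - i = Suc (m - i)" by simp
  then show ?thesis by simp
next
  case False then show ?thesis by (cases i) auto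
qed

lemma F_coeff: "m \<ge> 1 \<Longrightarrow> ([:0,1:]::rat poly)^(2*j) * coeff (Fpq m) j = of_nat (cc m j) * [:0,1:]^m"
proof (induction m arbitrary: j rule: Fpq.induct)
  case 1 then show ?case by simp
next
  case 2 then show ?case by (cases j) (auto simp: qv_def cc_def)
next
  case 3 then show ?case
    by (cases j) (auto simp: qv_def cc_def power2_eq_square)
next
  case (4 m)
  let ?Q = "[:0,1:]::rat poly"
  have e: "coeff (Fpq (Suc (Suc (Suc m)))) j = ?Q * coeff (Fpq (Suc (Suc m))) j
      + (if j = 0 then 0 else coeff (Fpq (Suc m)) (j-1))"
    by (simp add: coeff_qv coeff_pv)
  show ?case
  proof (cases j)
    case 0
    have "?Q^(2*0) * coeff (Fpq (Suc (Suc m))) 0 = of_nat (cc (Suc (Suc m)) 0) * ?Q^(Suc (Suc m))"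
      by (rule "4.IH"(1)) simp
    then show ?thesis using 0 e by (simp add: cc_def)
  next
    case (Suc i)
    have h1: "?Q^(2*Suc i) * coeff (Fpq (Suc (Suc m))) (Suc i) = of_nat (cc (Suc (Suc m)) (Suc i)) * ?Q^(Suc (Suc m))"
      by (rule "4.IH"(1)) simp
    have h2: "?Q^(2*i) * coeff (Fpq (Suc m)) i = of_nat (cc (Suc m) i) * ?Q^(Suc m)"
      by (rule "4.IH"(2)) simp
    have "?Q^(2*j) * coeff (Fpq (Suc (Suc (Suc m)))) j
       = ?Q * (?Q^(2*Suc i) * coeff (Fpq (Suc (Suc m))) (Suc i)) + ?Q^2 * (?Q^(2*i) * coeff (Fpq (Suc m)) i)"
      using e Suc by (simp add: algebra_simps power_add power2_eq_square)
    also have "\<dots> = (of_nat (cc (Suc (Suc m)) (Suc i)) + of_nat (cc (Suc m) i)) * ?Q^(Suc (Suc (Suc m)))"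
      unfolding h1 h2 by (simp add: algebra_simps power2_eq_square)
    also have "(of_nat (cc (Suc (Suc m)) (Suc i)) + of_nat (cc (Suc m) i) :: rat poly) = of_nat (cc (Suc (Suc (Suc m))) j)"
      using Suc pascal'[of m i] by (simp add: cc_def)
    finally show ?thesis .
  qed
qed
definition PP :: "nat \<Rightarrow> rat poly poly" where "PP n = (\<Prod>i\<in>{1..<n}. Fpq i)"

lemma cf_PP: "n \<ge> 1 \<Longrightarrow> cf n 1 = PP n"
    by (simp add: cf_def rising_F_def PP_def coeff_pCons poly_0_coeff_0[symmetric] poly_prod)

fun a :: "nat \<Rightarrow> nat \<Rightarrow> nat" where
  "a 0 s = (if s = 0 then 1 else 0)"
| "a (Suc n) s = (if n = 0 then (if s = 0 then 1 else 0) else (\<Sum>t\<le>s. a n t * cc n (s - t)))"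

lemma choose2S: "Suc n choose 2 = (n choose 2) + n"
  by (simp add: numeral_eq_Suc)

lemma PP_coeff: "n \<ge> 1 \<Longrightarrow> ([:0,1:]::rat poly)^(2*s) * coeff (PP n) s = of_nat (a n s) * [:0,1:]^(n choose 2)"
proof (induction n arbitrary: s)
  case 0 then show ?case by simp
next
  case (Suc n)
  let ?Q = "[:0,1:]::rat poly"
  show ?case
  proof (cases "n = 0")
    case True then show ?thesis by (simp add: PP_def coeff_1 binomial_eq_0)
  next
    case False
    then have n1: "n \<ge> 1" by simp
    have PPS: "PP (Suc n) = PP n * Fpq n" using n1 by (simp add: PP_def prod.atLeastLessThan_Suc)
    have "?Q^(2*s) * coeff (PP (Suc n)) s = (\<Sum>t\<le>s. (?Q^(2*t) * coeff (PP n) t) * (?Q^(2*(s-t)) * coeff (Fpq n) (s-t)))"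
      unfolding PPS coeff_mult sum_distrib_left
    proof (rule sum.cong)
      fix t assume "t \<in> {..s}"
      then have "2*s = 2*t + 2*(s-t)" by simp
      then have "?Q^(2*s) = ?Q^(2*t) * ?Q^(2*(s-t))" by (metis power_add)
      then show "?Q^(2*s) * (coeff (PP n) t * coeff (Fpq n) (s-t)) = (?Q^(2*t) * coeff (PP n) t) * (?Q^(2*(s-t)) * coeff (Fpq n) (s-t))"
        by (simp add: algebra_simps)
    qed simp
    also have "\<dots> = (\<Sum>t\<le>s. (of_nat (a n t) * ?Q^(n choose 2)) * (of_nat (cc n (s-t)) * ?Q^n))"
      by (simp only: Suc.IH[OF n1] F_coeff[OF n1])
    also have "\<dots> = (\<Sum>t\<le>s. of_nat (a n t * cc n (s - t)) * ?Q^((n choose 2) + n))"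
      by (simp add: power_add algebra_simps)
    also have "\<dots> = of_nat (a (Suc n) s) * ?Q^(Suc n choose 2)"
      using False choose2S[of n] by (simp add: sum_distrib_right[symmetric])
    finally show ?thesis .
  qed
qed
lemma a_rec: "n \<ge> 1 \<Longrightarrow> a (Suc n) s = (\<Sum>t\<le>s. a n t * cc n (s - t))"
  by (cases n) auto

lemma a0: "n \<ge> 1 \<Longrightarrow> a n 0 = 1"
proof (induction n rule: nat_induct_at_least)
  case base then show ?case by simp
next
  case (Suc n) then show ?case by (simp add: a_rec cc_def)
qed

lemma a1: "n \<ge> 1 \<Longrightarrow> a n 1 = (n - 2) choose 2"
proof (induction n rule: nat_induct_at_least)
  case base then show ?case by simp
next
  case (Suc n)
  have "a (Suc n) 1 = (n - 2) + ((n - 2) choose 2)"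
    using Suc by (simp add: a_rec a0 cc_def)
  also have "\<dots> = (Suc n - 2) choose 2"
  proof (cases "n \<ge> 2")
    case True then have "Suc n - 2 = Suc (n - 2)" by simp
    then show ?thesis using choose2S[of "n-2"] by simp
  next
    case False then show ?thesis by (cases n) (auto simp: numeral_eq_Suc)
  qed
  finally show ?case .
qed

lemma sum2': "(\<Sum>t\<le>(2::nat). g t * h (2 - t)) = g 0 * h 2 + g 1 * h 1 + g 2 * h 0"
  by (simp add: numeral_2_eq_2 atMost_Suc add_ac)
lemma sum3': "(\<Sum>t\<le>(3::nat). g t * h (3 - t)) = g 0 * h 3 + g 1 * h 2 + g 2 * h 1 + g 3 * h 0"
  by (simp add: numeral_3_eq_3 numeral_2_eq_2 atMost_Suc add_ac)
lemma sum2: "(\<Sum>t\<le>(2::nat). f t) = f 0 + f 1 + f 2"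
  by (simp add: numeral_2_eq_2 atMost_Suc add_ac)
lemma sum3: "(\<Sum>t\<le>(3::nat). f t) = f 0 + f 1 + f 2 + f 3"
  by (simp add: numeral_3_eq_3 numeral_2_eq_2 atMost_Suc add_ac)

lemma cc0: "cc n 0 = 1" by (simp add: cc_def)
lemma cc1: "cc n 1 = n - 2" by (simp add: cc_def)
lemma cc1': "cc n (Suc 0) = n - 2" by (simp add: cc_def)
lemma a1': "n \<ge> 1 \<Longrightarrow> a n (Suc 0) = (n - 2) choose 2" using a1 by simp
lemma cc2: "cc n 2 = (n - 3) choose 2" unfolding cc_def by (simp add: numeral_3_eq_3 numeral_2_eq_2)
lemma cc3: "cc n 3 = (n - 4) choose 3" unfolding cc_def by (simp add: eval_nat_numeral)

lemma a_rec2: "n \<ge> 1 \<Longrightarrow> a (Suc n) 2 = cc n 2 + ((n - 2) choose 2) * (n - 2) + a n 2"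
proof -
  assume n: "n \<ge> 1"
  have "a (Suc n) 2 = a n 0 * cc n 2 + a n 1 * cc n 1 + a n 2 * cc n 0"
    using a_rec[OF n, of 2] by (simp only: sum2')
  then show ?thesis using n by (simp del: a.simps add: a0 a1 cc0 cc1 a1' cc1')
qed

lemma a_rec3: "n \<ge> 1 \<Longrightarrow> a (Suc n) 3 = cc n 3 + ((n - 2) choose 2) * cc n 2 + a n 2 * (n - 2) + a n 3"
proof -
  assume n: "n \<ge> 1"
  have "a (Suc n) 3 = a n 0 * cc n 3 + a n 1 * cc n 2 + a n 2 * cc n 1 + a n 3 * cc n 0"
    using a_rec[OF n, of 3] by (simp only: sum3')
  then show ?thesis using n by (simp del: a.simps add: a0 a1 cc0 cc1 a1' cc1')
qed

lemma a_small2: "n \<le> 4 \<Longrightarrow> n \<ge> 1 \<Longrightarrow> a n 2 = 0"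
proof -
  have 1: "a 1 2 = 0" by simp
  have 2: "a 2 2 = 0" using a_rec2[of 1] 1 by (simp del: a.simps add: cc_def eval_nat_numeral)
  have 3: "a 3 2 = 0" using a_rec2[of 2] 2 by (simp del: a.simps add: cc_def eval_nat_numeral)
  have 4: "a 4 2 = 0" using a_rec2[of 3] 3 by (simp del: a.simps add: cc_def eval_nat_numeral)
  assume "n \<le> 4" "n \<ge> 1"
  then have "n = 1 \<or> n = 2 \<or> n = 3 \<or> n = 4" by auto
  then show ?thesis using 1 2 3 4 by auto
qed

lemma a_small3: "n \<le> 5 \<Longrightarrow> n \<ge> 1 \<Longrightarrow> a n 3 = 0"
proof -
  have 1: "a 1 3 = 0" by simp
  have 2: "a 2 3 = 0" using a_rec3[of 1] 1 a_small2[of 1] by (simp del: a.simps add: cc_def eval_nat_numeral)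
  have 3: "a 3 3 = 0" using a_rec3[of 2] 2 a_small2[of 2] by (simp del: a.simps add: cc_def eval_nat_numeral)
  have 4: "a 4 3 = 0" using a_rec3[of 3] 3 a_small2[of 3] by (simp del: a.simps add: cc_def eval_nat_numeral)
  have 5: "a 5 3 = 0" using a_rec3[of 4] 4 a_small2[of 4] by (simp del: a.simps add: cc_def eval_nat_numeral)
  assume "n \<le> 5" "n \<ge> 1"
  then have "n = 1 \<or> n = 2 \<or> n = 3 \<or> n = 4 \<or> n = 5" by auto
  then show ?thesis using 1 2 3 4 5 by auto
qed
lemma a2_form: "n \<ge> 4 \<Longrightarrow> rat_of_nat (a n 2) = 3 * of_nat ((n - 1) choose 4) - of_nat ((n - 3) choose 2)"
proof (induction n rule: nat_induct_at_least)
  case base then show ?case using a_small2[of 4] by (simp del: a.simps add: binomial_eq_0)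
next
  case (Suc n)
  then obtain m where m: "n = m + 4" by (metis add.commute le_Suc_ex)
  have "rat_of_nat (a (Suc n) 2) = of_nat (cc n 2) + of_nat ((n-2) choose 2) * of_nat (n-2) + of_nat (a n 2)"
    using a_rec2[of n] Suc by simp
  also have "\<dots> = 3 * of_nat ((Suc n - 1) choose 4) - of_nat ((Suc n - 3) choose 2)"
  proof -
    have IH: "rat_of_nat (a (m+4) 2) = 3 * of_nat ((m+3) choose 4) - of_nat ((m+1) choose 2)"
      using Suc.IH m by (simp add: add.commute)
    show ?thesis unfolding cc2 m by (simp add: IH ch2 ch4 field_simps)
  qed
  finally show ?case .
qed

lemma a3_form: "n \<ge> 5 \<Longrightarrow> rat_of_nat (a n 3) = 15 * of_nat (n choose 6) - 6 * of_nat ((n - 2) choose 4) + of_nat ((n - 4) choose 4)"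
proof (induction n rule: nat_induct_at_least)
  case base then show ?case using a_small3[of 5] by (simp del: a.simps add: binomial_eq_0)
next
  case (Suc n)
  then obtain m where m: "n = m + 5" by (metis add.commute le_Suc_ex)
  have "rat_of_nat (a (Suc n) 3) = of_nat (cc n 3) + of_nat ((n-2) choose 2) * of_nat (cc n 2) + of_nat (a n 2) * of_nat (n-2) + of_nat (a n 3)"
    using a_rec3[of n] Suc by simp
  also have "\<dots> = 15 * of_nat (Suc n choose 6) - 6 * of_nat ((Suc n - 2) choose 4) + of_nat ((Suc n - 4) choose 4)"
  proof -
    have IH: "rat_of_nat (a (m+5) 3) = 15 * of_nat ((m+5) choose 6) - 6 * of_nat ((m+3) choose 4) + of_nat ((m+1) choose 4)"
      using Suc.IH m by (simp add: add.commute)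
    have IH2: "rat_of_nat (a (m+5) 2) = 3 * of_nat ((m+4) choose 4) - of_nat ((m+2) choose 2)"
      using a2_form[of "m+5"] by (simp add: add.commute)
    show ?thesis unfolding cc2 cc3 m by (simp add: IH IH2 ch2 ch3 ch4 ch6 field_simps)
  qed
  finally show ?case .
qed
lemma key: "n \<ge> 1 \<Longrightarrow> ([:0,1:]::rat poly)^(2*s) * coeff (cf n 1) s = of_nat (a n s) * [:0,1:]^(n choose 2)"
  using PP_coeff cf_PP by simp

lemma cancel: assumes "([:0,1:]::rat poly)^(2*s) * c = k * [:0,1:]^e" "2*s \<le> e"
  shows "c = k * [:0,1:]^(e - 2*s)"
proof -
  let ?Q = "[:0,1:]::rat poly"
  have "?Q^e = ?Q^(2*s) * ?Q^(e - 2*s)" using assms(2) by (metis le_add_diff_inverse power_add)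
  then have "?Q^(2*s) * c = ?Q^(2*s) * (k * ?Q^(e - 2*s))" using assms(1) by (simp add: algebra_simps)
  moreover have "?Q^(2*s) \<noteq> 0" by simp
  ultimately show ?thesis by simp
qed


lemma c2_4: "n \<ge> 4 \<Longrightarrow> 6 \<le> n choose 2"
proof -
  assume "n \<ge> 4"
  then have "4 choose 2 \<le> n choose 2" by (rule binomial_right_mono)
  moreover have "(4::nat) choose 2 = 6" by (simp add: choose_two)
  ultimately show ?thesis by simp
qed

lemma c2_5: "n \<ge> 5 \<Longrightarrow> 10 \<le> n choose 2"
proof -
  assume "n \<ge> 5"
  then have "5 choose 2 \<le> n choose 2" by (rule binomial_right_mono)
  moreover have "(5::nat) choose 2 = 10" by (simp add: choose_two)
  ultimately show ?thesis by simp
qed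

theorem theorem14:
  fixes n :: nat
  assumes "n \<ge> 1"
  shows "coeff (cf n 1) 0 = [:0, 1:] ^ (n choose 2)
    \<and> (n \<le> 3 \<longrightarrow> coeff (cf n 1) 1 = 0)
    \<and> (n \<ge> 4 \<longrightarrow> coeff (cf n 1) 1
           = of_nat ((n - 2) choose 2) * [:0, 1:] ^ ((n choose 2) - 2))
    \<and> (n \<le> 4 \<longrightarrow> coeff (cf n 1) 2 = 0)
    \<and> (n \<ge> 5 \<longrightarrow> coeff (cf n 1) 2
           = (3 * of_nat ((n - 1) choose 4) - of_nat ((n - 3) choose 2)) * [:0, 1:] ^ ((n choose 2) - 4))
    \<and> (n \<le> 5 \<longrightarrow> coeff (cf n 1) 3 = 0)
    \<and> (n \<ge> 5 \<longrightarrow> coeff (cf n 1) 3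
           = (15 * of_nat (n choose 6) - 6 * of_nat ((n - 2) choose 4) + of_nat ((n - 4) choose 4))
             * [:0, 1:] ^ ((n choose 2) - 6))"
proof (intro conjI impI)
  let ?Q = "[:0,1:]::rat poly"
  have k: "\<And>s. ?Q^(2*s) * coeff (cf n 1) s = of_nat (a n s) * ?Q^(n choose 2)" using key assms by blast
  show "coeff (cf n 1) 0 = ?Q ^ (n choose 2)" using k[of 0] a0[OF assms] by simp
  show "coeff (cf n 1) 1 = 0" if "n \<le> 3"
  proof -
    have "a n 1 = 0" using a1[OF assms] that by simp
    then show ?thesis using k[of 1] by simp
  qed
  show "coeff (cf n 1) 1 = of_nat ((n - 2) choose 2) * ?Q ^ ((n choose 2) - 2)" if "n \<ge> 4"
    using cancel[OF k[of 1]] c2_4[OF that] a1[OF assms] by simp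
  show "coeff (cf n 1) 2 = 0" if "n \<le> 4"
    using k[of 2] a_small2[OF that assms] by simp
  show "coeff (cf n 1) 3 = 0" if "n \<le> 5"
    using k[of 3] a_small3[OF that assms] by simp
  show "coeff (cf n 1) 2 = (3 * of_nat ((n - 1) choose 4) - of_nat ((n - 3) choose 2)) * ?Q ^ ((n choose 2) - 4)" if "n \<ge> 5"
  proof -
    have "rat_of_int (int (a n 2)) = rat_of_int (3 * int ((n - 1) choose 4) - int ((n - 3) choose 2))"
      using a2_form[of n] that by simp
    then have i: "int (a n 2) = 3 * int ((n - 1) choose 4) - int ((n - 3) choose 2)" by (simp only: of_int_eq_iff)
    have "(of_nat (a n 2) :: rat poly) = of_int (int (a n 2))" by simp
    also have "\<dots> = 3 * of_nat ((n - 1) choose 4) - of_nat ((n - 3) choose 2)" unfolding i by simp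
    finally have e: "(of_nat (a n 2) :: rat poly) = 3 * of_nat ((n - 1) choose 4) - of_nat ((n - 3) choose 2)" .
    show ?thesis using cancel[OF k[of 2]] c2_5[OF that] unfolding e by simp
  qed
  show "coeff (cf n 1) 3 = (15 * of_nat (n choose 6) - 6 * of_nat ((n - 2) choose 4) + of_nat ((n - 4) choose 4)) * ?Q ^ ((n choose 2) - 6)" if "n \<ge> 5"
  proof -
    have "rat_of_int (int (a n 3)) = rat_of_int (15 * int (n choose 6) - 6 * int ((n - 2) choose 4) + int ((n - 4) choose 4))"
      using a3_form[of n] that by simp
    then have i: "int (a n 3) = 15 * int (n choose 6) - 6 * int ((n - 2) choose 4) + int ((n - 4) choose 4)" by (simp only: of_int_eq_iff)
    have "(of_nat (a n 3) :: rat poly) = of_int (int (a n 3))" by simp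
    also have "\<dots> = 15 * of_nat (n choose 6) - 6 * of_nat ((n - 2) choose 4) + of_nat ((n - 4) choose 4)" unfolding i by simp
    finally have e: "(of_nat (a n 3) :: rat poly) = 15 * of_nat (n choose 6) - 6 * of_nat ((n - 2) choose 4) + of_nat ((n - 4) choose 4)" .
    show ?thesis using cancel[OF k[of 3]] c2_5[OF that] unfolding e by simp
  qed
qed
end
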